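(* There is no novel partition of length $3$.
   Context: An integer partition is $\lambda=(\lambda_1,\dots,\lambda_k)$ with integers $\lambda_1\ge\dots\ge\lambda_k\ge 1$; $k$ is its length. For $v\in\mathbb{Z}^k$ let $v^{\perp B}=\{x\in\{-1,1\}^k: v\cdot x=0\}$; $\lambda^{\perp B}$ is this set for $(\lambda_1,\dots,\lambda_k)$. $V_\lambda\subset\mathbb{Z}^k$ is the set of vectors obtained from $(\lambda_1,\dots,\lambda_k)$ by permuting coordinates and changing signs of some coordinates, with first coordinate positive. For $I\subset\{1,\dots,m\}$, $\mathrm{Proj}_I:\{-1,1\}^m\to\{-1,1\}^{|I|}$ keeps the coordinates indexed by $I$. Reduction: for partitions $\mu$ of length $m$ and $\lambda$ of length $k\le m$, $\mu\Rightarrow\lambda$ iff there exist $I\subset\{1,\dots,m\}$, $|I|=k$, and $v\in V_\lambda$ with $\mathrm{Proj}_I(\mu^{\perp B})\subset v^{\perp B}$. $\mu$ strictly reduces to $\lambda$ iff $\mu\Rightarrow\lambda$ and not $\lambda\Rightarrow\mu$. Partitions $\lambda,\mu$ of the same length are equivalent iff there is $w\in V_\mu$ with $\lambda^{\perp B}=w^{\perp B}$. A partition $\lambda$ is novel iff $\lambda^{\perp B}\neq\emptyset$, $\lambda$ strictly reduces to no partition, and $\lambda$ is lexicographically smallest among partitions equivalent to it. *)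

theory Defs
  imports Main "HOL-Library.Multiset"
begin

text \<open>Vectors in Z^k are int lists of length k; coordinates are 0-indexed.\<close>

definition is_partition :: "int list \<Rightarrow> bool" where
  "is_partition lam \<longleftrightarrow> sorted_wrt (\<ge>) lam \<and> (\<forall>x\<in>set lam. x \<ge> 1)"

definition dotp :: "int list \<Rightarrow> int list \<Rightarrow> int" where
  "dotp v x = (\<Sum>i<length v. v ! i * x ! i)"

definition perpB :: "int list \<Rightarrow> int list set" where
  "perpB v = {x. length x = length v \<and> set x \<subseteq> {-1, 1} \<and> dotp v x = 0}"

definition Vset :: "int list \<Rightarrow> int list set" where
  "Vset lam = {v. \<exists>s p. length s = length lam \<and> set s \<subseteq> {-1, 1} \<and>
                     mset p = mset lam \<and> v = map2 (*) s p \<and> v \<noteq> [] \<and> hd v > 0}"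

definition Proj :: "nat set \<Rightarrow> int list \<Rightarrow> int list" where
  "Proj I x = nths x I"

definition reduces :: "int list \<Rightarrow> int list \<Rightarrow> bool" where
  "reduces mu lam \<longleftrightarrow> length lam \<le> length mu \<and>
     (\<exists>I v. I \<subseteq> {..<length mu} \<and> card I = length lam \<and> v \<in> Vset lam \<and>
            Proj I ` perpB mu \<subseteq> perpB v)"

definition strictly_reduces :: "int list \<Rightarrow> int list \<Rightarrow> bool" where
  "strictly_reduces mu lam \<longleftrightarrow> reduces mu lam \<and> \<not> reduces lam mu"

definition equivalent :: "int list \<Rightarrow> int list \<Rightarrow> bool" where
  "equivalent lam mu \<longleftrightarrow> length lam = length mu \<and> (\<exists>w\<in>Vset mu. perpB lam = perpB w)"

definition lex_le :: "int list \<Rightarrow> int list \<Rightarrow> bool" where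
  "lex_le a b \<longleftrightarrow> a = b \<or> (a, b) \<in> lexord {(x, y). x < y}"

definition novel :: "int list \<Rightarrow> bool" where
  "novel lam \<longleftrightarrow> is_partition lam \<and> perpB lam \<noteq> {} \<and>
     (\<forall>mu. is_partition mu \<longrightarrow> \<not> strictly_reduces lam mu) \<and>
     (\<forall>mu. is_partition mu \<and> equivalent mu lam \<longrightarrow> lex_le lam mu)"

end

theory Submission
  imports Defs
begin

lemma len3: "length l = 3 \<Longrightarrow> \<exists>a b c. l = [a,b,c]"
  by (cases l; cases "tl l"; cases "tl (tl l)"; auto)

lemma dot3: "dotp [a,b,c] [x,y,z] = a*x+b*y+c*z"
  by (simp add: dotp_def numeral_3_eq_3 lessThan_Suc)

lemma dot2: "dotp [a,b] [x,y] = a*x+b*y"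
  by (simp add: dotp_def numeral_2_eq_2 lessThan_Suc)

lemma red: assumes "is_partition [a,b,c]" shows "strictly_reduces [a,b,c] [1,1]"
proof -
  from assms have ab: "a \<ge> b" "b \<ge> c" "c \<ge> 1" by (auto simp: is_partition_def)
  have V: "[1,-1] \<in> Vset [1,1]"
    unfolding Vset_def by (rule CollectI, rule exI[of _ "[1,-1]"], rule exI[of _ "[1,1]"]) auto
  have P: "Proj {1,2} ` perpB [a,b,c] \<subseteq> perpB [1,-1]"
  proof
    fix y assume "y \<in> Proj {1,2} ` perpB [a,b,c]"
    then obtain x where x: "x \<in> perpB [a,b,c]" and y: "y = Proj {1,2} x" by auto
    from x have "length x = 3" by (simp add: perpB_def)
    then obtain x0 x1 x2 where xe: "x = [x0,x1,x2]" using len3 by blast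
    from x xe have s: "x0 \<in> {-1,1}" "x1 \<in> {-1,1}" "x2 \<in> {-1,1}" and d: "a*x0+b*x1+c*x2 = 0"
      by (auto simp: perpB_def dot3)
    have "x1 = x2" using s d ab by auto
    moreover have "y = [x1,x2]" using y xe by (simp add: Proj_def nths_Cons)
    ultimately show "y \<in> perpB [1,-1]" using s by (auto simp: perpB_def dot2)
  qed
  have "reduces [a,b,c] [1,1]"
    unfolding reduces_def
    apply (simp)
    apply (rule exI[of _ "{1,2}"])
    using V P by auto
  moreover have "\<not> reduces [1,1] [a,b,c]" by (simp add: reduces_def)
  ultimately show ?thesis by (simp add: strictly_reduces_def)
qed

theorem mainTheorem7:
  shows "\<not> (\<exists>lam. is_partition lam \<and> length lam = 3 \<and> novel lam)"
proof
  assume "\<exists>lam. is_partition lam \<and> length lam = 3 \<and> novel lam"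
  then obtain lam where p: "is_partition lam" "length lam = 3" "novel lam" by blast
  then obtain a b c where l: "lam = [a,b,c]" using len3 by blast
  have "is_partition [1,1]" by (simp add: is_partition_def)
  moreover have "strictly_reduces lam [1,1]" using red p(1) l by simp
  ultimately show False using p(3) by (auto simp: novel_def)
qed

end
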